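(* Let $G$ be a finite loopless graph (parallel edges allowed). The set $\mathrm{Short}(\mathcal{C}(G))$ consists of precisely the orientation covectors for $\mathcal{C}(G)$.
   Context: Fix a reference orientation $\mathcal{O}_0$ of $G=(V,E)$; $C_1(G;\mathbb{Z})$ is the free abelian group on $E$ (edges directed by $\mathcal{O}_0$), $E$ orthonormal; $\partial e=v-w$ for $e$ from $w$ to $v$, $\partial^*$ its adjoint; the cut lattice is $\mathcal{C}(G)=\mathrm{im}(\partial^* )\cap C_1(G;\mathbb{Z})$ (over $\mathbb{Q}$). For an orientation $\mathcal{O}$ of $G$, $\chi_{\mathcal{O}}\in C_1(G;\mathbb{Z})$ has $\langle\chi_{\mathcal{O}},e\rangle=1$ if $e$ has the same direction in $\mathcal{O}_0$ and $\mathcal{O}$, and $-1$ otherwise; its restriction to $\mathcal{C}(G)$, an element of $\mathcal{C}(G)^*$, is called an orientation covector. For an integral positive definite lattice $\Lambda$, $\Lambda^*=\{x\in\Lambda\otimes\mathbb{Q}:\langle x,y\rangle\in\mathbb{Z}\ \forall y\}$, $\mathrm{Char}(\Lambda)=\{\chi\in\Lambda^*:\langle\chi,y\rangle\equiv\langle y,y\rangle\pmod2\ \forall y\in\Lambda\}$, and $\mathrm{Short}(\Lambda)$ is the set of $\chi\in\mathrm{Char}(\Lambda)$ of minimal norm in $\chi+2\Lambda$. *)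

theory Defs
  imports Complex_Main
begin

text \<open>A finite loopless multigraph: vertex set V, edge set E, and the reference
orientation O0 given by tail/head maps (edge e goes from tail e to head e).
Chains with rational coefficients are functions 'e => rat vanishing off E;
E is an orthonormal basis, so the inner product is the sum over E.\<close>

definition inner_E :: "'e set \<Rightarrow> ('e \<Rightarrow> rat) \<Rightarrow> ('e \<Rightarrow> rat) \<Rightarrow> rat" where
  "inner_E E x y = (\<Sum>e\<in>E. x e * y e)"

definition integral_chains :: "'e set \<Rightarrow> ('e \<Rightarrow> rat) set" where
  "integral_chains E = {x. (\<forall>e\<in>E. x e \<in> \<int>) \<and> (\<forall>e. e \<notin> E \<longrightarrow> x e = 0)}"

text \<open>Adjoint of the boundary map (over Q): since d e = head e - tail e,
  <d* f, e> = f (head e) - f (tail e).\<close>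
definition coboundary :: "'e set \<Rightarrow> ('e \<Rightarrow> 'v) \<Rightarrow> ('e \<Rightarrow> 'v) \<Rightarrow> ('v \<Rightarrow> rat) \<Rightarrow> ('e \<Rightarrow> rat)" where
  "coboundary E src tgt f = (\<lambda>e. if e \<in> E then f (tgt e) - f (src e) else 0)"

definition cut_lattice :: "'e set \<Rightarrow> ('e \<Rightarrow> 'v) \<Rightarrow> ('e \<Rightarrow> 'v) \<Rightarrow> ('e \<Rightarrow> rat) set" where
  "cut_lattice E src tgt = range (coboundary E src tgt) \<inter> integral_chains E"

text \<open>Lattice tensor Q: the rational span of L.\<close>
definition qspan :: "('e \<Rightarrow> rat) set \<Rightarrow> ('e \<Rightarrow> rat) set" where
  "qspan L = {x. \<exists>S c. finite S \<and> S \<subseteq> L \<and> x = (\<lambda>e. \<Sum>y\<in>S. c y * y e)}"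

definition dual_lattice :: "'e set \<Rightarrow> ('e \<Rightarrow> rat) set \<Rightarrow> ('e \<Rightarrow> rat) set" where
  "dual_lattice E L = {x \<in> qspan L. \<forall>y\<in>L. inner_E E x y \<in> \<int>}"

definition Char :: "'e set \<Rightarrow> ('e \<Rightarrow> rat) set \<Rightarrow> ('e \<Rightarrow> rat) set" where
  "Char E L = {\<chi> \<in> dual_lattice E L.
     \<forall>y\<in>L. \<exists>k::int. inner_E E \<chi> y - inner_E E y y = 2 * of_int k}"

definition Short :: "'e set \<Rightarrow> ('e \<Rightarrow> rat) set \<Rightarrow> ('e \<Rightarrow> rat) set" where
  "Short E L = {\<chi> \<in> Char E L.
     \<forall>y\<in>L. inner_E E \<chi> \<chi> \<le> inner_E E (\<lambda>e. \<chi> e + 2 * y e) (\<lambda>e. \<chi> e + 2 * y e)}"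

definition is_orientation :: "'e set \<Rightarrow> ('e \<Rightarrow> 'v) \<Rightarrow> ('e \<Rightarrow> 'v) \<Rightarrow> ('e \<Rightarrow> 'v \<times> 'v) \<Rightarrow> bool" where
  "is_orientation E src tgt Or \<longleftrightarrow> (\<forall>e\<in>E. Or e = (src e, tgt e) \<or> Or e = (tgt e, src e))"

definition chi_orient :: "'e set \<Rightarrow> ('e \<Rightarrow> 'v) \<Rightarrow> ('e \<Rightarrow> 'v) \<Rightarrow> ('e \<Rightarrow> 'v \<times> 'v) \<Rightarrow> ('e \<Rightarrow> rat)" where
  "chi_orient E src tgt Or = (\<lambda>e. if e \<in> E then (if Or e = (src e, tgt e) then 1 else -1) else 0)"

text \<open>Orientation covectors: the restriction of chi_O to L, viewed as an element of the
dual lattice via the (nondegenerate) pairing on L tensor Q.\<close>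
definition orientation_covectors :: "'e set \<Rightarrow> ('e \<Rightarrow> 'v) \<Rightarrow> ('e \<Rightarrow> 'v) \<Rightarrow> ('e \<Rightarrow> rat) set \<Rightarrow> ('e \<Rightarrow> rat) set" where
  "orientation_covectors E src tgt L = {x \<in> dual_lattice E L. \<exists>Or. is_orientation E src tgt Or \<and>
      (\<forall>y\<in>L. inner_E E x y = inner_E E (chi_orient E src tgt Or) y)}"

end

theory Submission
  imports Defs
begin

definition dv :: "'e set \<Rightarrow> ('e \<Rightarrow> 'v) \<Rightarrow> ('e \<Rightarrow> 'v) \<Rightarrow> 'v \<Rightarrow> ('e \<Rightarrow> rat)" where
 "dv E src tgt v = coboundary E src tgt (\<lambda>x. if x = v then 1 else 0)"

fun walk :: "'e set \<Rightarrow> ('e \<Rightarrow> 'v \<times> 'v) \<Rightarrow> 'v \<Rightarrow> 'e list \<Rightarrow> 'v \<Rightarrow> bool" where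
  "walk E Or u [] w = (u = w)"
| "walk E Or u (e#es) w = (e \<in> E \<and> fst (Or e) = u \<and> walk E Or (snd (Or e)) es w)"

lemma inner_E_upd:
  assumes "finite E" "e \<in> E"
  shows "inner_E E (f(e:=x)) y = inner_E E f y - f e * y e + x * y e"
proof -
  have "inner_E E (f(e:=x)) y = x * y e + (\<Sum>d\<in>E-{e}. (f(e:=x)) d * y d)"
    unfolding inner_E_def using assms by (simp add: sum.remove)
  also have "(\<Sum>d\<in>E-{e}. (f(e:=x)) d * y d) = (\<Sum>d\<in>E-{e}. f d * y d)"
    by (rule sum.cong) auto
  also have "\<dots> = inner_E E f y - f e * y e"
    unfolding inner_E_def using assms by (simp add: sum.remove)
  finally show ?thesis by (simp add: fun_upd_def algebra_simps)
qed

lemma inner_E_diff: "inner_E E (\<lambda>e. a e - b e) y = inner_E E a y - inner_E E b y"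
  unfolding inner_E_def by (simp add: algebra_simps sum_subtractf)

lemma inner_E_sq: "inner_E E (\<lambda>e. a e + 2 * b e) (\<lambda>e. a e + 2 * b e)
   = inner_E E a a + 4 * inner_E E a b + 4 * inner_E E b b"
  unfolding inner_E_def by (simp add: algebra_simps sum.distrib sum_distrib_left)

lemma cob_expand:
  assumes "finite V" "\<And>e. e \<in> E \<Longrightarrow> src e \<in> V \<and> tgt e \<in> V"
  shows "inner_E E z (coboundary E src tgt f) = (\<Sum>v\<in>V. f v * inner_E E z (dv E src tgt v))"
proof -
  have "(\<Sum>v\<in>V. f v * inner_E E z (dv E src tgt v))
     = (\<Sum>v\<in>V. \<Sum>e\<in>E. z e * (f v * dv E src tgt v e))"
    unfolding inner_E_def by (simp add: sum_distrib_left algebra_simps)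
  also have "\<dots> = (\<Sum>e\<in>E. \<Sum>v\<in>V. z e * (f v * dv E src tgt v e))"
    by (rule sum.swap)
  also have "\<dots> = (\<Sum>e\<in>E. z e * (\<Sum>v\<in>V. f v * dv E src tgt v e))"
    by (simp add: sum_distrib_left)
  also have "\<dots> = (\<Sum>e\<in>E. z e * coboundary E src tgt f e)"
  proof (rule sum.cong)
    fix e assume e: "e \<in> E"
    have "(\<Sum>v\<in>V. f v * dv E src tgt v e) = (\<Sum>v\<in>V. (if tgt e = v then f v else 0) - (if src e = v then f v else 0))"
      by (rule sum.cong) (auto simp: dv_def coboundary_def e algebra_simps)
    also have "\<dots> = f (tgt e) - f (src e)"
      using assms(1) assms(2)[OF e] by (simp add: sum_subtractf)
    finally show "z e * (\<Sum>v\<in>V. f v * dv E src tgt v e) = z e * coboundary E src tgt f e"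
      by (simp add: coboundary_def e)
  qed simp
  finally show ?thesis unfolding inner_E_def by simp
qed

lemma chi_orient_val:
  assumes "is_orientation E src tgt Or" "e \<in> E"
  shows "chi_orient E src tgt Or e = 1 \<or> chi_orient E src tgt Or e = -1"
  using assms unfolding chi_orient_def by auto

lemma chi_char:
  assumes "is_orientation E src tgt Or" "y \<in> integral_chains E"
  shows "\<exists>k::int. inner_E E (chi_orient E src tgt Or) y - inner_E E y y = 2 * of_int k"
proof -
  define c where "c = chi_orient E src tgt Or"
  define t where "t = (\<lambda>e. \<lfloor>c e\<rfloor> * \<lfloor>y e\<rfloor> - \<lfloor>y e\<rfloor> * \<lfloor>y e\<rfloor>)"
  have tm: "c e * y e - y e * y e = of_int (t e)" if "e \<in> E" for e
  proof -
    have "y e \<in> \<int>" using assms(2) that unfolding integral_chains_def by auto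
    then have 1: "y e = of_int \<lfloor>y e\<rfloor>" by (metis Ints_cases floor_of_int)
    have "c e = 1 \<or> c e = -1" using chi_orient_val[OF assms(1) that] c_def by simp
    then have 2: "c e = of_int \<lfloor>c e\<rfloor>" by auto
    show ?thesis by (simp add: t_def 1[symmetric] 2[symmetric])
  qed
  have ev: "2 dvd t e" if "e \<in> E" for e
  proof -
    have "c e = 1 \<or> c e = -1" using chi_orient_val[OF assms(1) that] c_def by simp
    moreover have "\<lfloor>(-1::rat)\<rfloor> = -1" by (metis floor_of_int of_int_1 of_int_minus)
    ultimately have "\<lfloor>c e\<rfloor> = 1 \<or> \<lfloor>c e\<rfloor> = -1" by auto
    then consider "\<lfloor>c e\<rfloor> = 1" | "\<lfloor>c e\<rfloor> = -1" by blast
    then show ?thesis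
    proof cases
      case 1
      then have "t e = \<lfloor>y e\<rfloor> * (1 - \<lfloor>y e\<rfloor>)" unfolding t_def by (simp add: algebra_simps)
      then show ?thesis by (auto simp: even_mult_iff)
    next
      case 2
      then have "t e = - (\<lfloor>y e\<rfloor> * (1 + \<lfloor>y e\<rfloor>))" unfolding t_def by (simp add: algebra_simps)
      then show ?thesis by (auto simp: even_mult_iff)
    qed
  qed
  have "inner_E E c y - inner_E E y y = (\<Sum>e\<in>E. c e * y e - y e * y e)"
    unfolding inner_E_def by (simp add: sum_subtractf)
  also have "\<dots> = of_int (\<Sum>e\<in>E. t e)" by (simp add: tm)
  finally have eq: "inner_E E c y - inner_E E y y = of_int (\<Sum>e\<in>E. t e)" .
  have "2 dvd (\<Sum>e\<in>E. t e)" using ev by (simp add: dvd_sum)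
  then obtain k where "(\<Sum>e\<in>E. t e) = 2 * k" by blast
  then show ?thesis using eq c_def by (intro exI[of _ k]) simp
qed

lemma chi_short:
  assumes "is_orientation E src tgt Or" "y \<in> integral_chains E"
  shows "0 \<le> inner_E E (chi_orient E src tgt Or) y + inner_E E y y"
proof -
  have "inner_E E (chi_orient E src tgt Or) y + inner_E E y y
      = (\<Sum>e\<in>E. chi_orient E src tgt Or e * y e + y e * y e)"
    unfolding inner_E_def by (simp add: sum.distrib)
  also have "\<dots> \<ge> 0"
  proof (rule sum_nonneg)
    fix e assume e: "e \<in> E"
    have "y e \<in> \<int>" using assms(2) e unfolding integral_chains_def by auto
    then obtain m where m: "y e = of_int m" by (metis Ints_cases)
    have i1: "0 \<le> m*(m+1)" by (cases "m \<ge> 0") (auto intro: mult_nonneg_nonneg mult_nonpos_nonpos)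
    have i2: "0 \<le> m*(m-1)" by (cases "m \<ge> 1") (auto intro: mult_nonneg_nonneg mult_nonpos_nonpos)
    have i: "0 \<le> m * m + m" "0 \<le> m*m - m" using i1 i2 by (simp_all add: algebra_simps)
    have "0 \<le> (of_int m::rat)*of_int m + of_int m" using of_int_nonneg[OF i(1), where 'a=rat] by simp
    moreover have "0 \<le> (of_int m::rat)*of_int m - of_int m" using of_int_nonneg[OF i(2), where 'a=rat] by simp
    ultimately have "0 \<le> (of_int m::rat)*of_int m + of_int m" "0 \<le> (of_int m::rat)*of_int m - of_int m" by auto
    then show "0 \<le> chi_orient E src tgt Or e * y e + y e * y e"
      using chi_orient_val[OF assms(1) e] m by (auto simp: algebra_simps)
  qed
  finally show ?thesis .
qed

lemma rev_edge:
  assumes fin: "finite E" and o: "is_orientation E src tgt Or" and e: "e \<in> E"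
    and ab: "Or e = (a, b)" and ne: "src e \<noteq> tgt e"
  shows "is_orientation E src tgt (Or(e:=(b,a))) \<and>
    (\<forall>v. inner_E E (chi_orient E src tgt (Or(e:=(b,a)))) (dv E src tgt v)
       = inner_E E (chi_orient E src tgt Or) (dv E src tgt v)
         + 2 * (if a = v then 1 else 0) - 2 * (if b = v then 1 else 0))"
proof
  have oe: "Or e = (src e, tgt e) \<or> Or e = (tgt e, src e)" using o e unfolding is_orientation_def by auto
  show "is_orientation E src tgt (Or(e:=(b,a)))"
    using o oe ab unfolding is_orientation_def by auto
  have ch: "chi_orient E src tgt (Or(e:=(b,a))) = (chi_orient E src tgt Or)(e := - chi_orient E src tgt Or e)"
    using oe ab ne e unfolding chi_orient_def by (auto simp: fun_eq_iff)
  show "\<forall>v. inner_E E (chi_orient E src tgt (Or(e:=(b,a)))) (dv E src tgt v)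
       = inner_E E (chi_orient E src tgt Or) (dv E src tgt v)
         + 2 * (if a = v then 1 else 0) - 2 * (if b = v then 1 else 0)"
  proof
    fix v
    have "chi_orient E src tgt Or e * dv E src tgt v e = (if b = v then 1 else 0) - (if a = v then 1 else 0)"
      using oe ab ne e unfolding chi_orient_def dv_def coboundary_def by auto
    then show "inner_E E (chi_orient E src tgt (Or(e:=(b,a)))) (dv E src tgt v)
       = inner_E E (chi_orient E src tgt Or) (dv E src tgt v)
         + 2 * (if a = v then 1 else 0) - 2 * (if b = v then 1 else 0)"
      unfolding ch using inner_E_upd[OF fin e] by simp
  qed
qed

lemma walk_snoc:
  "walk E Or u es x \<Longrightarrow> e \<in> E \<Longrightarrow> fst (Or e) = x \<Longrightarrow> walk E Or u (es @ [e]) (snd (Or e))"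
  by (induction es arbitrary: u) auto

lemma walk_split:
  "walk E Or u (xs @ ys) w \<Longrightarrow> \<exists>m. walk E Or u xs m \<and> walk E Or m ys w"
  by (induction xs arbitrary: u) auto

lemma walk_V:
  assumes "is_orientation E src tgt Or" "\<And>e. e \<in> E \<Longrightarrow> src e \<in> V \<and> tgt e \<in> V"
  shows "walk E Or u es w \<Longrightarrow> u \<in> V \<Longrightarrow> w \<in> V"
proof (induction es arbitrary: u)
  case Nil then show ?case by simp
next
  case (Cons e es)
  then have "e \<in> E" by simp
  then have "snd (Or e) \<in> V" using assms unfolding is_orientation_def by (metis snd_conv)
  then show ?case using Cons.IH Cons.prems by auto
qed

lemma rev_walk:
  assumes fin: "finite E" and ne: "\<And>e. e \<in> E \<Longrightarrow> src e \<noteq> tgt e"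
  shows "is_orientation E src tgt Or \<Longrightarrow> walk E Or u es w \<Longrightarrow>
    \<exists>Or'. is_orientation E src tgt Or' \<and>
    (\<forall>v. inner_E E (chi_orient E src tgt Or') (dv E src tgt v)
       = inner_E E (chi_orient E src tgt Or) (dv E src tgt v)
         + 2 * (if u = v then 1 else 0) - 2 * (if w = v then 1 else 0))
    \<and> (\<forall>d. d \<notin> set es \<longrightarrow> Or' d = Or d)"
proof (induction "length es" arbitrary: u es rule: less_induct)
  case less
  show ?case
  proof (cases es)
    case Nil
    then show ?thesis using less by (intro exI[of _ Or]) auto
  next
    case (Cons e es')
    have eE: "e \<in> E" and u: "fst (Or e) = u" and wk: "walk E Or (snd (Or e)) es' w"
      using less Cons by auto
    show ?thesis
    proof (cases "e \<in> set es'")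
      case True
      then obtain xs ys where xy: "es' = xs @ e # ys" by (meson split_list)
      then obtain m where "walk E Or (snd (Or e)) xs m" "walk E Or m (e # ys) w"
        using walk_split wk by metis
      then have "walk E Or u (e # ys) w" using u by auto
      moreover have "length (e # ys) < length es" using Cons xy by simp
      ultimately obtain Or' where Or': "is_orientation E src tgt Or'"
        "\<forall>v. inner_E E (chi_orient E src tgt Or') (dv E src tgt v)
       = inner_E E (chi_orient E src tgt Or) (dv E src tgt v)
         + 2 * (if u = v then 1 else 0) - 2 * (if w = v then 1 else 0)"
        "\<forall>d. d \<notin> set (e # ys) \<longrightarrow> Or' d = Or d"
        using less.hyps less.prems(1) by blast
      moreover have "set (e # ys) \<subseteq> set es" using Cons xy by auto
      ultimately show ?thesis by blast
    next
      case False
      obtain Or1 where O1: "is_orientation E src tgt Or1"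
        "\<forall>v. inner_E E (chi_orient E src tgt Or1) (dv E src tgt v)
       = inner_E E (chi_orient E src tgt Or) (dv E src tgt v)
         + 2 * (if snd (Or e) = v then 1 else 0) - 2 * (if w = v then 1 else 0)"
        "\<forall>d. d \<notin> set es' \<longrightarrow> Or1 d = Or d"
        using less.hyps[of es' "snd (Or e)"] less.prems(1) wk Cons by auto
      have e1: "Or1 e = (u, snd (Or e))" using O1(3) False u by (metis prod.collapse)
      obtain Or2 where O2: "Or2 = Or1(e := (snd (Or e), u))" by blast
      have r: "is_orientation E src tgt Or2 \<and>
        (\<forall>v. inner_E E (chi_orient E src tgt Or2) (dv E src tgt v)
       = inner_E E (chi_orient E src tgt Or1) (dv E src tgt v)
         + 2 * (if u = v then 1 else 0) - 2 * (if snd (Or e) = v then 1 else 0))"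
        unfolding O2 by (rule rev_edge[OF fin O1(1) eE e1 ne[OF eE]])
      show ?thesis
        apply (rule exI[of _ Or2])
        using r O1 O2 Cons by auto
    qed
  qed
qed

lemma closed_cut:
  assumes o: "is_orientation E src tgt Or"
    and cl: "\<And>e. e \<in> E \<Longrightarrow> fst (Or e) \<in> R \<Longrightarrow> snd (Or e) \<in> R"
  shows "inner_E E (chi_orient E src tgt Or) (coboundary E src tgt (\<lambda>x. if x \<in> R then 1 else 0))
       = inner_E E (coboundary E src tgt (\<lambda>x. if x \<in> R then 1 else 0)) (coboundary E src tgt (\<lambda>x. if x \<in> R then 1 else 0))"
  unfolding inner_E_def
proof (rule sum.cong)
  fix e assume e: "e \<in> E"
  have oe: "Or e = (src e, tgt e) \<or> Or e = (tgt e, src e)" using o e unfolding is_orientation_def by auto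
  then show "chi_orient E src tgt Or e * coboundary E src tgt (\<lambda>x. if x \<in> R then 1 else 0) e =
         coboundary E src tgt (\<lambda>x. if x \<in> R then 1 else 0) e * coboundary E src tgt (\<lambda>x. if x \<in> R then 1 else 0) e"
    using cl[OF e] e unfolding chi_orient_def coboundary_def by (cases "src e = tgt e") auto
qed simp

lemma sum_ind:
  fixes g :: "'a \<Rightarrow> rat"
  assumes "finite V" "R \<subseteq> V"
  shows "(\<Sum>v\<in>V. (if v \<in> R then 1 else 0) * g v) = sum g R"
proof -
  have "sum g R = sum g (V \<inter> R)" using assms by (simp add: Int_absorb1)
  also have "\<dots> = (\<Sum>v\<in>V. if v \<in> R then g v else 0)" using assms by (simp add: sum.inter_restrict)
  finally show ?thesis by (auto intro: sum.cong)
qed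

lemma dv_L: "dv E src tgt v \<in> cut_lattice E src tgt"
  unfolding cut_lattice_def integral_chains_def dv_def coboundary_def by auto

lemma cob_neg: "coboundary E src tgt (\<lambda>x. - f x) = (\<lambda>e. - coboundary E src tgt f e)"
  unfolding coboundary_def by auto

lemma cobR_L: "coboundary E src tgt (\<lambda>x. - (if x \<in> R then 1 else 0)) \<in> cut_lattice E src tgt"
  unfolding cut_lattice_def integral_chains_def coboundary_def by auto

context
  fixes V :: "'v set" and E :: "'e set" and src tgt :: "'e \<Rightarrow> 'v" and \<chi> :: "'e \<Rightarrow> rat"
  assumes finV: "finite V" and finE: "finite E"
    and inV: "\<And>e. e \<in> E \<Longrightarrow> src e \<in> V \<and> tgt e \<in> V"
    and nl: "\<And>e. e \<in> E \<Longrightarrow> src e \<noteq> tgt e"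
    and sh: "\<chi> \<in> Short E (cut_lattice E src tgt)"
begin

definition "Ds Or v = inner_E E \<chi> (dv E src tgt v) - inner_E E (chi_orient E src tgt Or) (dv E src tgt v)"
lemma Ds_eq: "Ds Or v = inner_E E \<chi> (dv E src tgt v) - inner_E E (chi_orient E src tgt Or) (dv E src tgt v)"
  by (simp add: Ds_def)

definition "Phi Or = (\<Sum>v\<in>V. \<bar>Ds Or v\<bar>)"

lemma Ds_even:
  assumes "is_orientation E src tgt Or"
  shows "\<exists>k::int. Ds Or v = 2 * of_int k"
proof -
  have "\<chi> \<in> Char E (cut_lattice E src tgt)" using sh unfolding Short_def by auto
  then have "\<forall>y\<in>cut_lattice E src tgt. \<exists>k::int. inner_E E \<chi> y - inner_E E y y = 2 * of_int k"
    unfolding Char_def by simp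
  then have "\<exists>k::int. inner_E E \<chi> (dv E src tgt v) - inner_E E (dv E src tgt v) (dv E src tgt v) = 2 * of_int k"
    using dv_L by (rule bspec)
  then obtain k1 :: int where k1: "inner_E E \<chi> (dv E src tgt v) - inner_E E (dv E src tgt v) (dv E src tgt v) = 2 * of_int k1"
    by blast
  have "dv E src tgt v \<in> integral_chains E" using dv_L[of E src tgt v] unfolding cut_lattice_def by blast
  then obtain k2 :: int where k2: "inner_E E (chi_orient E src tgt Or) (dv E src tgt v) - inner_E E (dv E src tgt v) (dv E src tgt v) = 2 * of_int k2"
    using chi_char[OF assms] by blast
  show ?thesis unfolding Ds_def using k1 k2 by (intro exI[of _ "k1 - k2"]) (simp add: algebra_simps)
qed

lemma inner_all: "(\<Sum>v\<in>V. inner_E E z (dv E src tgt v)) = 0"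
proof -
  have "inner_E E z (coboundary E src tgt (\<lambda>_. 1)) = (\<Sum>v\<in>V. 1 * inner_E E z (dv E src tgt v))"
    by (rule cob_expand[OF finV inV])
  moreover have "coboundary E src tgt (\<lambda>_. 1) = (\<lambda>_. 0)" unfolding coboundary_def by auto
  ultimately show ?thesis unfolding inner_E_def by simp
qed

lemma Ds_sum: "(\<Sum>v\<in>V. Ds Or v) = 0"
  unfolding Ds_def by (simp add: sum_subtractf inner_all)

lemma step:
  assumes o: "is_orientation E src tgt Or" and nz: "\<exists>v\<in>V. Ds Or v \<noteq> 0"
  shows "\<exists>Or'. is_orientation E src tgt Or' \<and> Phi Or' \<le> Phi Or - 2"
proof -
  have "\<exists>u\<in>V. Ds Or u > 0"
  proof (rule ccontr)
    assume "\<not> ?thesis"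
    then have le: "\<forall>v\<in>V. 0 \<le> - Ds Or v" by force
    have "(\<Sum>v\<in>V. - Ds Or v) = 0" using Ds_sum by (simp add: sum_negf)
    then have "\<forall>v\<in>V. - Ds Or v = 0" using sum_nonneg_eq_0_iff[OF finV, of "\<lambda>v. - Ds Or v"] le by blast
    then show False using nz by auto
  qed
  then obtain u where uV: "u \<in> V" and upos: "Ds Or u > 0" by blast
  define R where "R = {x \<in> V. \<exists>es. walk E Or u es x}"
  have RV: "R \<subseteq> V" unfolding R_def by auto
  have finR: "finite R" using finite_subset[OF RV finV] .
  have uR: "u \<in> R" unfolding R_def using uV by (auto intro: exI[of _ "[]"])
  have cl: "snd (Or e) \<in> R" if e: "e \<in> E" and f: "fst (Or e) \<in> R" for e
  proof -
    obtain es where "walk E Or u es (fst (Or e))" using f unfolding R_def by auto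
    then have "walk E Or u (es @ [e]) (snd (Or e))" using walk_snoc e by metis
    moreover have "snd (Or e) \<in> V" using o e inV unfolding is_orientation_def by (metis snd_conv)
    ultimately show ?thesis unfolding R_def by blast
  qed
  define ind where "ind = (\<lambda>x. if x \<in> R then 1 else (0::rat))"
  define c where "c = coboundary E src tgt ind"
  define y where "y = coboundary E src tgt (\<lambda>x. - ind x)"
  have yL: "y \<in> cut_lattice E src tgt" unfolding y_def ind_def by (rule cobR_L)
  have y_eq: "y = (\<lambda>e. - c e)" unfolding y_def c_def by (rule cob_neg)
  have "inner_E E \<chi> \<chi> \<le> inner_E E (\<lambda>e. \<chi> e + 2 * y e) (\<lambda>e. \<chi> e + 2 * y e)"
    using sh yL unfolding Short_def by blast
  then have "0 \<le> inner_E E \<chi> y + inner_E E y y" by (simp add: inner_E_sq)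
  moreover have "inner_E E \<chi> y = - inner_E E \<chi> c" "inner_E E y y = inner_E E c c"
    unfolding y_eq inner_E_def by (simp_all add: sum_negf)
  ultimately have A: "inner_E E \<chi> c \<le> inner_E E c c" by simp
  have B: "inner_E E (chi_orient E src tgt Or) c = inner_E E c c"
    unfolding c_def ind_def by (rule closed_cut[OF o]) (use cl in blast)
  have C: "inner_E E z c = (\<Sum>v\<in>R. inner_E E z (dv E src tgt v))" for z
  proof -
    have "inner_E E z c = (\<Sum>v\<in>V. ind v * inner_E E z (dv E src tgt v))"
      unfolding c_def by (rule cob_expand[OF finV inV])
    then show ?thesis using sum_ind[OF finV RV, of "\<lambda>v. inner_E E z (dv E src tgt v)"] unfolding ind_def by simp
  qed
  have sumR: "(\<Sum>v\<in>R. Ds Or v) \<le> 0"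
    using A B C[of \<chi>] C[of "chi_orient E src tgt Or"] unfolding Ds_def by (simp add: sum_subtractf)
  have "\<exists>w\<in>R. Ds Or w < 0"
  proof (rule ccontr)
    assume "\<not> ?thesis"
    then have "\<forall>v\<in>R. 0 \<le> Ds Or v" by force
    then have "Ds Or u \<le> (\<Sum>v\<in>R. Ds Or v)" using member_le_sum[OF uR _ finR] by blast
    then show False using sumR upos by simp
  qed
  then obtain w where wR: "w \<in> R" and wneg: "Ds Or w < 0" by blast
  then obtain es where wk: "walk E Or u es w" unfolding R_def by auto
  have wV: "w \<in> V" using wR RV by auto
  obtain Or' where O': "is_orientation E src tgt Or'"
    "\<forall>v. inner_E E (chi_orient E src tgt Or') (dv E src tgt v)
       = inner_E E (chi_orient E src tgt Or) (dv E src tgt v)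
         + 2 * (if u = v then 1 else 0) - 2 * (if w = v then 1 else 0)"
    using rev_walk[OF finE nl o wk] by blast
  have Ds': "Ds Or' v = Ds Or v - 2 * (if u = v then 1 else 0) + 2 * (if w = v then 1 else 0)" for v
    unfolding Ds_def using O'(2) by simp
  have uw: "u \<noteq> w" using upos wneg by auto
  obtain k1 :: int where k1: "Ds Or u = 2 * of_int k1" using Ds_even[OF o] by blast
  obtain k2 :: int where k2: "Ds Or w = 2 * of_int k2" using Ds_even[OF o] by blast
  have "k1 \<ge> 1" using upos k1 by simp
  then have "(1::rat) \<le> of_int k1" by simp
  then have u2: "Ds Or u \<ge> 2" using k1 by simp
  have "k2 \<le> -1" using wneg k2 by simp
  then have "of_int k2 \<le> (-1::rat)" by simp
  then have w2: "Ds Or w \<le> -2" using k2 by simp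
  have le: "\<bar>Ds Or' v\<bar> \<le> \<bar>Ds Or v\<bar>" for v
    using Ds'[of v] u2 w2 uw by (cases "v = u"; cases "v = w") auto
  have eu: "\<bar>Ds Or v\<bar> - \<bar>Ds Or' v\<bar> = 2" if "v = u" for v
    using Ds'[of v] u2 uw that by auto
  have "Phi Or - Phi Or' = (\<Sum>v\<in>V. \<bar>Ds Or v\<bar> - \<bar>Ds Or' v\<bar>)"
    unfolding Phi_def by (simp add: sum_subtractf)
  also have "\<dots> \<ge> \<bar>Ds Or u\<bar> - \<bar>Ds Or' u\<bar>"
    by (rule member_le_sum[OF uV _ finV]) (use le in simp)
  finally have "Phi Or' \<le> Phi Or - 2" using eu[of u] by simp
  then show ?thesis using O'(1) by blast
qed

lemma exists_good: "\<exists>Or. is_orientation E src tgt Or \<and> (\<forall>v\<in>V. Ds Or v = 0)"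
proof -
  have main: "is_orientation E src tgt Or \<Longrightarrow> Phi Or \<le> of_nat n \<Longrightarrow>
    \<exists>Or'. is_orientation E src tgt Or' \<and> (\<forall>v\<in>V. Ds Or' v = 0)" for n Or
  proof (induction n arbitrary: Or)
    case 0
    moreover have "0 \<le> Phi Or" unfolding Phi_def by (rule sum_nonneg) simp
    ultimately have "Phi Or = 0" by simp
    then have "\<forall>v\<in>V. \<bar>Ds Or v\<bar> = 0" unfolding Phi_def using sum_nonneg_eq_0_iff[OF finV, of "\<lambda>v. \<bar>Ds Or v\<bar>"] by simp
    then show ?case using 0 by auto
  next
    case (Suc n)
    show ?case
    proof (cases "\<forall>v\<in>V. Ds Or v = 0")
      case True then show ?thesis using Suc by auto
    next
      case False
      then obtain Or' where "is_orientation E src tgt Or'" "Phi Or' \<le> Phi Or - 2"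
        using step[OF Suc.prems(1)] by blast
      moreover then have "Phi Or' \<le> of_nat n" using Suc.prems(2) by simp
      ultimately show ?thesis using Suc.IH by blast
    qed
  qed
  define O0 where "O0 = (\<lambda>e. (src e, tgt e))"
  have o0: "is_orientation E src tgt O0" unfolding O0_def is_orientation_def by auto
  have "Phi O0 \<le> of_int \<lceil>Phi O0\<rceil>" by (rule le_of_int_ceiling)
  also have "\<dots> \<le> of_int (int (nat \<lceil>Phi O0\<rceil>))" by simp
  also have "\<dots> = of_nat (nat \<lceil>Phi O0\<rceil>)" by (rule of_int_of_nat_eq)
  finally have "Phi O0 \<le> of_nat (nat \<lceil>Phi O0\<rceil>)" .
  then show ?thesis using main[OF o0] by blast
qed

end


theorem proposition3p3:
  fixes V :: "'v set" and E :: "'e set" and src tgt :: "'e \<Rightarrow> 'v"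
  assumes "finite V" and "finite E"
    and "\<And>e. e \<in> E \<Longrightarrow> src e \<in> V \<and> tgt e \<in> V"
    and "\<And>e. e \<in> E \<Longrightarrow> src e \<noteq> tgt e"
  shows "Short E (cut_lattice E src tgt) = orientation_covectors E src tgt (cut_lattice E src tgt)"
proof
  show "Short E (cut_lattice E src tgt) \<subseteq> orientation_covectors E src tgt (cut_lattice E src tgt)"
  proof
    fix x assume sh: "x \<in> Short E (cut_lattice E src tgt)"
    obtain Or where o: "is_orientation E src tgt Or" and z: "\<forall>v\<in>V. Ds E src tgt x Or v = 0"
      using exists_good[OF assms sh] by blast
    have dual: "x \<in> dual_lattice E (cut_lattice E src tgt)" using sh unfolding Short_def Char_def by auto
    have "inner_E E x y = inner_E E (chi_orient E src tgt Or) y" if yL: "y \<in> cut_lattice E src tgt" for y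
    proof -
      obtain f where y: "y = coboundary E src tgt f" using yL unfolding cut_lattice_def by auto
      have "inner_E E x y = (\<Sum>v\<in>V. f v * inner_E E x (dv E src tgt v))"
        unfolding y by (rule cob_expand[OF assms(1,3)])
      also have "\<dots> = (\<Sum>v\<in>V. f v * inner_E E (chi_orient E src tgt Or) (dv E src tgt v))"
        using z Ds_eq[OF assms sh] by (intro sum.cong) auto
      also have "\<dots> = inner_E E (chi_orient E src tgt Or) y"
        unfolding y by (rule cob_expand[OF assms(1,3), symmetric])
      finally show ?thesis .
    qed
    then show "x \<in> orientation_covectors E src tgt (cut_lattice E src tgt)"
      unfolding orientation_covectors_def using dual o by blast
  qed
next
  show "orientation_covectors E src tgt (cut_lattice E src tgt) \<subseteq> Short E (cut_lattice E src tgt)"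
  proof
    fix x assume "x \<in> orientation_covectors E src tgt (cut_lattice E src tgt)"
    then obtain Or where dual: "x \<in> dual_lattice E (cut_lattice E src tgt)"
      and o: "is_orientation E src tgt Or"
      and p: "\<forall>y\<in>cut_lattice E src tgt. inner_E E x y = inner_E E (chi_orient E src tgt Or) y"
      unfolding orientation_covectors_def by blast
    have ch: "x \<in> Char E (cut_lattice E src tgt)"
      unfolding Char_def using dual p chi_char[OF o] unfolding cut_lattice_def by auto
    have "inner_E E x x \<le> inner_E E (\<lambda>e. x e + 2 * y e) (\<lambda>e. x e + 2 * y e)"
      if "y \<in> cut_lattice E src tgt" for y
    proof -
      have "0 \<le> inner_E E (chi_orient E src tgt Or) y + inner_E E y y"
        using chi_short[OF o] that unfolding cut_lattice_def by auto
      then show ?thesis using p that by (simp add: inner_E_sq)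
    qed
    then show "x \<in> Short E (cut_lattice E src tgt)" unfolding Short_def using ch by blast
  qed
qed

end
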